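(* Let $\mathcal{C}$ be a pre-Hilbert $*$-category and $A$ an object of $\mathcal{C}$. Then the ordered $*$-ring $\mathcal{C}(A,A)$ is inverse closed: for all Hermitian $a,b\in\mathcal{C}(A,A)$, if $a\geq b$ and $b\succ 0$, then $a\succ 0$.
   Context: A $*$-category is a category with a choice of $f^*\colon Y\to X$ for each $f\colon X\to Y$ such that $1^*=1$, $(gf)^*=f^*g^*$, $(f^* )^*=f$. A pre-Hilbert $*$-category is a $*$-category with (R1) a zero object, (R2) orthonormal biproducts of all pairs of objects (biproducts $(X,s_1,r_1,s_2,r_2)$ with $r_k=s_k^*$), (R3) an isometric kernel (kernel $m$ with $m^*m=1$) for every morphism, and (R4) every diagonal $\Delta\colon X\to X\oplus X$ a kernel of some morphism. Such a category is additive, so $\mathcal{C}(A,A)$ is a ring (addition from the additive structure, multiplication by composition) with involution $a\mapsto a^*$. An endomorphism $a$ is Hermitian if $a^*=a$. The canonical order on Hermitian elements of $\mathcal{C}(A,A)$: $a\leq b$ iff $b-a = y^*y$ for some object $Y$ and some $y\colon A\to Y$. Write $a\prec b$ (or $b\succ a$) if $a\leq b$ and $b-a$ is invertible. *)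

theory Defs
  imports Main
begin

text \<open>A (small-or-large) category presented by carrier sets of objects and arrows,
  domain/codomain maps, composition (Comp g f means g after f), identities,
  together with an involution Star (the dagger).\<close>

record ('o, 'm) starcat =
  Obj  :: "'o set"
  Arr  :: "'m set"
  Dom  :: "'m \<Rightarrow> 'o"
  Cod  :: "'m \<Rightarrow> 'o"
  Comp :: "'m \<Rightarrow> 'm \<Rightarrow> 'm"
  Id   :: "'o \<Rightarrow> 'm"
  Star :: "'m \<Rightarrow> 'm"

definition hom :: "('o, 'm) starcat \<Rightarrow> 'o \<Rightarrow> 'o \<Rightarrow> 'm set" where
  "hom C X Y = {f \<in> Arr C. Dom C f = X \<and> Cod C f = Y}"

definition category :: "('o, 'm) starcat \<Rightarrow> bool" where
  "category C \<longleftrightarrow>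
     (\<forall>f \<in> Arr C. Dom C f \<in> Obj C \<and> Cod C f \<in> Obj C) \<and>
     (\<forall>X \<in> Obj C. Id C X \<in> hom C X X) \<and>
     (\<forall>X \<in> Obj C. \<forall>Y \<in> Obj C. \<forall>Z \<in> Obj C. \<forall>f \<in> hom C X Y. \<forall>g \<in> hom C Y Z.
        Comp C g f \<in> hom C X Z) \<and>
     (\<forall>W \<in> Obj C. \<forall>X \<in> Obj C. \<forall>Y \<in> Obj C. \<forall>Z \<in> Obj C.
        \<forall>f \<in> hom C W X. \<forall>g \<in> hom C X Y. \<forall>h \<in> hom C Y Z.
        Comp C h (Comp C g f) = Comp C (Comp C h g) f) \<and>
     (\<forall>X \<in> Obj C. \<forall>Y \<in> Obj C. \<forall>f \<in> hom C X Y.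
        Comp C f (Id C X) = f \<and> Comp C (Id C Y) f = f)"

definition star_category :: "('o, 'm) starcat \<Rightarrow> bool" where
  "star_category C \<longleftrightarrow> category C \<and>
     (\<forall>X \<in> Obj C. \<forall>Y \<in> Obj C. \<forall>f \<in> hom C X Y. Star C f \<in> hom C Y X) \<and>
     (\<forall>X \<in> Obj C. Star C (Id C X) = Id C X) \<and>
     (\<forall>X \<in> Obj C. \<forall>Y \<in> Obj C. \<forall>Z \<in> Obj C. \<forall>f \<in> hom C X Y. \<forall>g \<in> hom C Y Z.
        Star C (Comp C g f) = Comp C (Star C f) (Star C g)) \<and>
     (\<forall>f \<in> Arr C. Star C (Star C f) = f)"

definition zero_object :: "('o, 'm) starcat \<Rightarrow> 'o \<Rightarrow> bool" where
  "zero_object C Z \<longleftrightarrow> Z \<in> Obj C \<and>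
     (\<forall>X \<in> Obj C. (\<exists>!f. f \<in> hom C Z X) \<and> (\<exists>!f. f \<in> hom C X Z))"

definition zmor :: "('o, 'm) starcat \<Rightarrow> 'o \<Rightarrow> 'o \<Rightarrow> 'm" where
  "zmor C X Y = (THE h. \<exists>Z f g. zero_object C Z \<and> f \<in> hom C X Z \<and> g \<in> hom C Z Y
                          \<and> h = Comp C g f)"

definition biproduct ::
  "('o, 'm) starcat \<Rightarrow> 'o \<Rightarrow> 'o \<Rightarrow> 'o \<Rightarrow> 'm \<Rightarrow> 'm \<Rightarrow> 'm \<Rightarrow> 'm \<Rightarrow> bool" where
  "biproduct C X1 X2 P s1 r1 s2 r2 \<longleftrightarrow>
     X1 \<in> Obj C \<and> X2 \<in> Obj C \<and> P \<in> Obj C \<and>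
     s1 \<in> hom C X1 P \<and> r1 \<in> hom C P X1 \<and> s2 \<in> hom C X2 P \<and> r2 \<in> hom C P X2 \<and>
     Comp C r1 s1 = Id C X1 \<and> Comp C r2 s2 = Id C X2 \<and>
     Comp C r2 s1 = zmor C X1 X2 \<and> Comp C r1 s2 = zmor C X2 X1 \<and>
     (\<forall>W \<in> Obj C. \<forall>f1 \<in> hom C W X1. \<forall>f2 \<in> hom C W X2.
        \<exists>!u. u \<in> hom C W P \<and> Comp C r1 u = f1 \<and> Comp C r2 u = f2) \<and>
     (\<forall>W \<in> Obj C. \<forall>g1 \<in> hom C X1 W. \<forall>g2 \<in> hom C X2 W.
        \<exists>!v. v \<in> hom C P W \<and> Comp C v s1 = g1 \<and> Comp C v s2 = g2)"

definition orthonormal_biproduct ::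
  "('o, 'm) starcat \<Rightarrow> 'o \<Rightarrow> 'o \<Rightarrow> 'o \<Rightarrow> 'm \<Rightarrow> 'm \<Rightarrow> 'm \<Rightarrow> 'm \<Rightarrow> bool" where
  "orthonormal_biproduct C X1 X2 P s1 r1 s2 r2 \<longleftrightarrow>
     biproduct C X1 X2 P s1 r1 s2 r2 \<and> r1 = Star C s1 \<and> r2 = Star C s2"

definition is_kernel :: "('o, 'm) starcat \<Rightarrow> 'm \<Rightarrow> 'm \<Rightarrow> bool" where
  "is_kernel C f m \<longleftrightarrow>
     f \<in> Arr C \<and> m \<in> Arr C \<and> Cod C m = Dom C f \<and>
     Comp C f m = zmor C (Dom C m) (Cod C f) \<and>
     (\<forall>W \<in> Obj C. \<forall>g \<in> hom C W (Dom C f). Comp C f g = zmor C W (Cod C f) \<longrightarrow>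
        (\<exists>!h. h \<in> hom C W (Dom C m) \<and> Comp C m h = g))"

definition pre_hilbert_star_category :: "('o, 'm) starcat \<Rightarrow> bool" where
  "pre_hilbert_star_category C \<longleftrightarrow> star_category C \<and>
     \<comment> \<open>(R1) zero object\<close>
     (\<exists>Z. zero_object C Z) \<and>
     \<comment> \<open>(R2) orthonormal biproducts of all pairs\<close>
     (\<forall>X1 \<in> Obj C. \<forall>X2 \<in> Obj C. \<exists>P s1 r1 s2 r2. orthonormal_biproduct C X1 X2 P s1 r1 s2 r2) \<and>
     \<comment> \<open>(R3) isometric kernels\<close>
     (\<forall>f \<in> Arr C. \<exists>m. is_kernel C f m \<and> Comp C (Star C m) m = Id C (Dom C m)) \<and>
     \<comment> \<open>(R4) every diagonal is a kernel\<close>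
     (\<forall>X P s1 r1 s2 r2 d. orthonormal_biproduct C X X P s1 r1 s2 r2 \<and> d \<in> hom C X P \<and>
        Comp C r1 d = Id C X \<and> Comp C r2 d = Id C X \<longrightarrow> (\<exists>f. is_kernel C f d))"

text \<open>Addition of parallel morphisms induced by biproducts: f + g = codiagonal o <f,g>.\<close>
definition hadd :: "('o, 'm) starcat \<Rightarrow> 'm \<Rightarrow> 'm \<Rightarrow> 'm" where
  "hadd C f g = (THE h. \<exists>P s1 r1 s2 r2 u v.
      biproduct C (Cod C f) (Cod C f) P s1 r1 s2 r2 \<and>
      u \<in> hom C (Dom C f) P \<and> Comp C r1 u = f \<and> Comp C r2 u = g \<and>
      v \<in> hom C P (Cod C f) \<and> Comp C v s1 = Id C (Cod C f) \<and> Comp C v s2 = Id C (Cod C f) \<and>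
      h = Comp C v u)"

definition hneg :: "('o, 'm) starcat \<Rightarrow> 'm \<Rightarrow> 'm" where
  "hneg C f = (THE g. g \<in> hom C (Dom C f) (Cod C f) \<and> hadd C f g = zmor C (Dom C f) (Cod C f))"

definition hminus :: "('o, 'm) starcat \<Rightarrow> 'm \<Rightarrow> 'm \<Rightarrow> 'm" where
  "hminus C f g = hadd C f (hneg C g)"

definition invertible_mor :: "('o, 'm) starcat \<Rightarrow> 'm \<Rightarrow> bool" where
  "invertible_mor C f \<longleftrightarrow> f \<in> Arr C \<and>
     (\<exists>g \<in> hom C (Cod C f) (Dom C f). Comp C g f = Id C (Dom C f) \<and> Comp C f g = Id C (Cod C f))"

definition hermitian :: "('o, 'm) starcat \<Rightarrow> 'm \<Rightarrow> bool" where
  "hermitian C a \<longleftrightarrow> Star C a = a"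

definition canon_le :: "('o, 'm) starcat \<Rightarrow> 'o \<Rightarrow> 'm \<Rightarrow> 'm \<Rightarrow> bool" where
  "canon_le C A a b \<longleftrightarrow> a \<in> hom C A A \<and> b \<in> hom C A A \<and> hermitian C a \<and> hermitian C b \<and>
     (\<exists>Y \<in> Obj C. \<exists>y \<in> hom C A Y. hminus C b a = Comp C (Star C y) y)"

definition canon_prec :: "('o, 'm) starcat \<Rightarrow> 'o \<Rightarrow> 'm \<Rightarrow> 'm \<Rightarrow> bool" where
  "canon_prec C A a b \<longleftrightarrow> canon_le C A a b \<and> invertible_mor C (hminus C b a)"

end

theory Submission
  imports Defs
begin


locale phc =
  fixes C :: "('o, 'm) starcat"
  assumes phc: "pre_hilbert_star_category C"
begin

abbreviation arr where "arr f \<equiv> f \<in> Arr C"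
abbreviation cmp (infixr "\<cdot>" 70) where "g \<cdot> f \<equiv> Comp C g f"
abbreviation st ("_\<^sup>\<dagger>" [1000] 1000) where "f\<^sup>\<dagger> \<equiv> Star C f"
abbreviation dm where "dm f \<equiv> Dom C f"
abbreviation cd where "cd f \<equiv> Cod C f"
abbreviation idm where "idm X \<equiv> Id C X"
abbreviation ob where "ob X \<equiv> X \<in> Obj C"
abbreviation zr where "zr X Y \<equiv> zmor C X Y"
abbreviation add (infixl "\<oplus>" 65) where "f \<oplus> g \<equiv> hadd C f g"

lemma cat: "category C" and starc: "star_category C"
  using phc unfolding pre_hilbert_star_category_def star_category_def by auto

lemma hom_iff: "f \<in> hom C X Y \<longleftrightarrow> arr f \<and> dm f = X \<and> cd f = Y"
  by (simp add: hom_def)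

lemma arr_obj[simp]: "arr f \<Longrightarrow> ob (dm f)" "arr f \<Longrightarrow> ob (cd f)"
  using cat unfolding category_def by auto

lemma hom_obj: "f \<in> hom C X Y \<Longrightarrow> ob X" "f \<in> hom C X Y \<Longrightarrow> ob Y"
  unfolding hom_iff using arr_obj by blast+

lemma comp_simps[simp]:
  assumes "arr f" "arr g" "dm g = cd f"
  shows "arr (g \<cdot> f)" "dm (g \<cdot> f) = dm f" "cd (g \<cdot> f) = cd g"
proof -
  have "f \<in> hom C (dm f) (cd f)" "g \<in> hom C (cd f) (cd g)" using assms by (auto simp: hom_iff)
  moreover have "ob (dm f)" "ob (cd f)" "ob (cd g)" using assms by auto
  ultimately have "g \<cdot> f \<in> hom C (dm f) (cd g)" using cat unfolding category_def by blast
  then show "arr (g \<cdot> f)" "dm (g \<cdot> f) = dm f" "cd (g \<cdot> f) = cd g" by (auto simp: hom_iff)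
qed

lemma assoc[simp]:
  assumes "arr f" "arr g" "arr h" "dm g = cd f" "dm h = cd g"
  shows "(h \<cdot> g) \<cdot> f = h \<cdot> (g \<cdot> f)"
proof -
  have "f \<in> hom C (dm f) (cd f)" "g \<in> hom C (cd f) (cd g)" "h \<in> hom C (cd g) (cd h)"
    using assms by (auto simp: hom_iff)
  moreover have "ob (dm f)" "ob (cd f)" "ob (cd g)" "ob (cd h)" using assms by auto
  moreover have "\<forall>W \<in> Obj C. \<forall>X \<in> Obj C. \<forall>Y \<in> Obj C. \<forall>Z \<in> Obj C.
        \<forall>f \<in> hom C W X. \<forall>g \<in> hom C X Y. \<forall>h \<in> hom C Y Z.
        Comp C h (Comp C g f) = Comp C (Comp C h g) f" using cat unfolding category_def by blast
  ultimately show ?thesis by metis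
qed

lemma id_simps[simp]:
  assumes "ob X"
  shows "arr (idm X)" "dm (idm X) = X" "cd (idm X) = X"
  using assms cat unfolding category_def by (auto simp: hom_iff)

lemma idlr: "arr f \<Longrightarrow> idm (cd f) \<cdot> f = f \<and> f \<cdot> idm (dm f) = f"
proof -
  assume "arr f"
  then have "f \<in> hom C (dm f) (cd f)" "ob (dm f)" "ob (cd f)" by (auto simp: hom_iff)
  then show ?thesis using cat unfolding category_def by blast
qed

lemma idl[simp]: "arr f \<Longrightarrow> X = cd f \<Longrightarrow> idm X \<cdot> f = f"
  and idr[simp]: "arr f \<Longrightarrow> X = dm f \<Longrightarrow> f \<cdot> idm X = f"
  using idlr by auto

lemma star_simps[simp]:
  assumes "arr f"
  shows "arr (f\<^sup>\<dagger>)" "dm (f\<^sup>\<dagger>) = cd f" "cd (f\<^sup>\<dagger>) = dm f" "(f\<^sup>\<dagger>)\<^sup>\<dagger> = f"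
proof -
  have "f \<in> hom C (dm f) (cd f)" "ob (dm f)" "ob (cd f)" using assms by (auto simp: hom_iff)
  then have "f\<^sup>\<dagger> \<in> hom C (cd f) (dm f)" using starc unfolding star_category_def by blast
  then show "arr (f\<^sup>\<dagger>)" "dm (f\<^sup>\<dagger>) = cd f" "cd (f\<^sup>\<dagger>) = dm f" by (auto simp: hom_iff)
  show "(f\<^sup>\<dagger>)\<^sup>\<dagger> = f" using assms starc unfolding star_category_def by blast
qed

lemma star_id[simp]: "ob X \<Longrightarrow> (idm X)\<^sup>\<dagger> = idm X"
  using starc unfolding star_category_def by auto

lemma star_comp[simp]:
  assumes "arr f" "arr g" "dm g = cd f"
  shows "(g \<cdot> f)\<^sup>\<dagger> = f\<^sup>\<dagger> \<cdot> g\<^sup>\<dagger>"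
proof -
  have "f \<in> hom C (dm f) (cd f)" "g \<in> hom C (cd f) (cd g)" using assms by (auto simp: hom_iff)
  moreover have "ob (dm f)" "ob (cd f)" "ob (cd g)" using assms by auto
  ultimately show ?thesis using starc unfolding star_category_def by blast
qed


lemma zero_unique:
  assumes "zero_object C Z" "zero_object C Z'" "f \<in> hom C X Z" "g \<in> hom C Z Y"
    "f' \<in> hom C X Z'" "g' \<in> hom C Z' Y"
  shows "g \<cdot> f = g' \<cdot> f'"
proof -
  have Z: "ob Z" "ob Z'" using assms unfolding zero_object_def by auto
  obtain i where i: "i \<in> hom C Z Z'" using assms(1) Z unfolding zero_object_def by blast
  have X: "ob X" "ob Y" using assms(3,4) by (auto simp: hom_iff)
  have u1: "\<exists>!h. h \<in> hom C X Z'" using assms(2) X unfolding zero_object_def by blast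
  have u2: "\<exists>!h. h \<in> hom C Z Y" using assms(1) X unfolding zero_object_def by blast
  have a: "i \<cdot> f \<in> hom C X Z'" using i assms by (auto simp: hom_iff)
  have 1: "i \<cdot> f = f'" using u1 a assms(5) by blast
  have b: "g' \<cdot> i \<in> hom C Z Y" using i assms by (auto simp: hom_iff)
  have 2: "g' \<cdot> i = g" using u2 b assms(4) by blast
  have "g' \<cdot> (i \<cdot> f) = (g' \<cdot> i) \<cdot> f" using i assms(3,6) by (simp add: hom_iff)
  then show ?thesis using 1 2 by simp
qed

lemma zmor_eq:
  assumes "zero_object C Z" "f \<in> hom C X Z" "g \<in> hom C Z Y"
  shows "zr X Y = g \<cdot> f"
  unfolding zmor_def
proof (rule the_equality)
  show "\<exists>Z f' g'. zero_object C Z \<and> f' \<in> hom C X Z \<and> g' \<in> hom C Z Y \<and> g \<cdot> f = g' \<cdot> f'"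
    using assms by blast
next
  fix h assume "\<exists>Z f' g'. zero_object C Z \<and> f' \<in> hom C X Z \<and> g' \<in> hom C Z Y \<and> h = g' \<cdot> f'"
  then obtain Z' f' g' where "zero_object C Z'" "f' \<in> hom C X Z'" "g' \<in> hom C Z' Y" "h = g' \<cdot> f'" by blast
  then show "h = g \<cdot> f" using zero_unique[OF _ assms(1) _ _ assms(2,3)] by blast
qed

lemma zero_ex: "\<exists>Z. zero_object C Z"
  using phc unfolding pre_hilbert_star_category_def by auto

lemma zmor_through:
  assumes "ob X" "ob Y"
  obtains Z f g where "zero_object C Z" "f \<in> hom C X Z" "g \<in> hom C Z Y" "zr X Y = g \<cdot> f"
proof -
  obtain Z where Z: "zero_object C Z" using zero_ex by blast
  then have "\<exists>f. f \<in> hom C X Z" "\<exists>g. g \<in> hom C Z Y" using assms unfolding zero_object_def by blast+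
  then obtain f g where fg: "f \<in> hom C X Z" "g \<in> hom C Z Y" by blast
  have "zr X Y = g \<cdot> f" using zmor_eq[OF Z fg] .
  then show ?thesis using that Z fg by blast
qed

lemma zmor_hom[simp]: 
  assumes "ob X" "ob Y" shows "zr X Y \<in> hom C X Y"
proof -
  obtain Z f g where Z: "zero_object C Z" "f \<in> hom C X Z" "g \<in> hom C Z Y" "zr X Y = g \<cdot> f"
    using zmor_through[OF assms] by blast
  show ?thesis unfolding Z(4) using Z(2,3) by (simp add: hom_iff)
qed

lemma zmor_simps[simp]:
  assumes "ob X" "ob Y"
  shows "arr (zr X Y)" "dm (zr X Y) = X" "cd (zr X Y) = Y"
  using zmor_hom[OF assms] unfolding hom_iff by auto

lemma zmor_left[simp]:
  assumes "arr h" "dm h = Y" "ob X"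
  shows "h \<cdot> zr X Y = zr X (cd h)"
proof -
  have "ob Y" using assms by auto
  obtain Z f g where Z: "zero_object C Z" "f \<in> hom C X Z" "g \<in> hom C Z Y" "zr X Y = g \<cdot> f"
    using zmor_through[OF \<open>ob X\<close> \<open>ob Y\<close>] by blast
  have "h \<cdot> g \<in> hom C Z (cd h)" using Z(3) assms by (simp add: hom_iff)
  then have "zr X (cd h) = (h \<cdot> g) \<cdot> f" using zmor_eq Z(1,2) by blast
  also have "\<dots> = h \<cdot> (g \<cdot> f)" using Z(2,3) assms by (simp add: hom_iff)
  finally show ?thesis using Z(4) by simp
qed

lemma zmor_right[simp]:
  assumes "arr k" "cd k = X" "ob Y"
  shows "zr X Y \<cdot> k = zr (dm k) Y"
proof -
  have "ob X" using assms by auto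
  obtain Z f g where Z: "zero_object C Z" "f \<in> hom C X Z" "g \<in> hom C Z Y" "zr X Y = g \<cdot> f"
    using zmor_through[OF \<open>ob X\<close> \<open>ob Y\<close>] by blast
  have "f \<cdot> k \<in> hom C (dm k) Z" using Z(2) assms by (simp add: hom_iff)
  then have "zr (dm k) Y = g \<cdot> (f \<cdot> k)" using zmor_eq Z(1,3) by blast
  also have "\<dots> = (g \<cdot> f) \<cdot> k" using Z(2,3) assms by (simp add: hom_iff)
  finally show ?thesis using Z(4) by simp
qed

lemma zmor_star[simp]:
  assumes "ob X" "ob Y"
  shows "(zr X Y)\<^sup>\<dagger> = zr Y X"
proof -
  obtain Z f g where Z: "zero_object C Z" "f \<in> hom C X Z" "g \<in> hom C Z Y" "zr X Y = g \<cdot> f"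
    using zmor_through[OF assms] by blast
  have "f\<^sup>\<dagger> \<in> hom C Z X" "g\<^sup>\<dagger> \<in> hom C Y Z" using Z(2,3) by (auto simp: hom_iff)
  then have "zr Y X = f\<^sup>\<dagger> \<cdot> g\<^sup>\<dagger>" using zmor_eq Z(1) by blast
  also have "\<dots> = (g \<cdot> f)\<^sup>\<dagger>" using Z(2,3) by (simp add: hom_iff)
  finally show ?thesis using Z(4) by simp
qed

end



context phc
begin

lemma bp_basic:
  assumes "biproduct C X1 X2 P s1 r1 s2 r2"
  shows "s1 \<in> hom C X1 P" "r1 \<in> hom C P X1" "s2 \<in> hom C X2 P" "r2 \<in> hom C P X2"
    "r1 \<cdot> s1 = idm X1" "r2 \<cdot> s2 = idm X2" "r2 \<cdot> s1 = zr X1 X2" "r1 \<cdot> s2 = zr X2 X1"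
    "ob X1" "ob X2" "ob P"
  using assms unfolding biproduct_def by auto

lemma bp_pair:
  assumes "biproduct C X1 X2 P s1 r1 s2 r2" "f1 \<in> hom C W X1" "f2 \<in> hom C W X2"
  obtains u where "u \<in> hom C W P" "r1 \<cdot> u = f1" "r2 \<cdot> u = f2"
proof -
  have "ob W" using hom_obj assms(2) by blast
  then show ?thesis using assms that unfolding biproduct_def by blast
qed

lemma bp_pair_uniq:
  assumes "biproduct C X1 X2 P s1 r1 s2 r2" "u \<in> hom C W P" "u' \<in> hom C W P"
    "r1 \<cdot> u = r1 \<cdot> u'" "r2 \<cdot> u = r2 \<cdot> u'"
  shows "u = u'"
proof -
  have "ob W" using hom_obj assms(2) by blast
  have "r1 \<cdot> u \<in> hom C W X1" "r2 \<cdot> u \<in> hom C W X2"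
    using assms(2) bp_basic[OF assms(1)] by (simp_all add: hom_iff)
  then have "\<exists>!v. v \<in> hom C W P \<and> r1 \<cdot> v = r1 \<cdot> u \<and> r2 \<cdot> v = r2 \<cdot> u"
    using assms(1) \<open>ob W\<close> unfolding biproduct_def by blast
  then show ?thesis using assms by metis
qed

lemma bp_copair:
  assumes "biproduct C X1 X2 P s1 r1 s2 r2" "g1 \<in> hom C X1 W" "g2 \<in> hom C X2 W"
  obtains v where "v \<in> hom C P W" "v \<cdot> s1 = g1" "v \<cdot> s2 = g2"
proof -
  have "ob W" using hom_obj assms(2) by blast
  then show ?thesis using assms that unfolding biproduct_def by blast
qed

lemma bp_copair_uniq:
  assumes "biproduct C X1 X2 P s1 r1 s2 r2" "v \<in> hom C P W" "v' \<in> hom C P W"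
    "v \<cdot> s1 = v' \<cdot> s1" "v \<cdot> s2 = v' \<cdot> s2"
  shows "v = v'"
proof -
  have "ob W" using hom_obj assms(2) by blast
  have "v \<cdot> s1 \<in> hom C X1 W" "v \<cdot> s2 \<in> hom C X2 W"
    using assms(2) bp_basic[OF assms(1)] by (simp_all add: hom_iff)
  then have "\<exists>!w. w \<in> hom C P W \<and> w \<cdot> s1 = v \<cdot> s1 \<and> w \<cdot> s2 = v \<cdot> s2"
    using assms(1) \<open>ob W\<close> unfolding biproduct_def by blast
  then show ?thesis using assms by metis
qed

lemma bp_swap:
  assumes "biproduct C X1 X2 P s1 r1 s2 r2"
  shows "biproduct C X2 X1 P s2 r2 s1 r1"
  using assms unfolding biproduct_def by blast

lemma onb_ex:
  assumes "ob X1" "ob X2"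
  obtains P s1 r1 s2 r2 where "orthonormal_biproduct C X1 X2 P s1 r1 s2 r2"
  using phc assms unfolding pre_hilbert_star_category_def by blast

lemma onb_bp: "orthonormal_biproduct C X1 X2 P s1 r1 s2 r2 \<Longrightarrow> biproduct C X1 X2 P s1 r1 s2 r2"
  and onb_r: "orthonormal_biproduct C X1 X2 P s1 r1 s2 r2 \<Longrightarrow> r1 = s1\<^sup>\<dagger> \<and> r2 = s2\<^sup>\<dagger>"
  unfolding orthonormal_biproduct_def by auto

lemma sum_char:
  assumes bp: "biproduct C Y Y P s1 r1 s2 r2" and f: "f \<in> hom C X Y"
    and u: "u \<in> hom C X P" "r1 \<cdot> u = f" "r2 \<cdot> u = g"
    and v: "v \<in> hom C P Y" "v \<cdot> s1 = idm Y" "v \<cdot> s2 = idm Y"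
  shows "f \<oplus> g = v \<cdot> u"
proof -
  have df: "Dom C f = X" "Cod C f = Y" using f by (simp_all add: hom_iff)
  note B = bp_basic[OF bp]
  show ?thesis
    unfolding hadd_def df
  proof (rule the_equality)
    show "\<exists>P s1 r1 s2 r2 u' v'.
      biproduct C Y Y P s1 r1 s2 r2 \<and>
      u' \<in> hom C X P \<and> r1 \<cdot> u' = f \<and> r2 \<cdot> u' = g \<and>
      v' \<in> hom C P Y \<and> v' \<cdot> s1 = idm Y \<and> v' \<cdot> s2 = idm Y \<and> v \<cdot> u = v' \<cdot> u'"
      using bp u v by blast
  next
    fix h assume "\<exists>P s1 r1 s2 r2 u' v'.
      biproduct C Y Y P s1 r1 s2 r2 \<and>
      u' \<in> hom C X P \<and> r1 \<cdot> u' = f \<and> r2 \<cdot> u' = g \<and>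
      v' \<in> hom C P Y \<and> v' \<cdot> s1 = idm Y \<and> v' \<cdot> s2 = idm Y \<and> h = v' \<cdot> u'"
    then obtain P' s1' r1' s2' r2' u' v' where
      bp': "biproduct C Y Y P' s1' r1' s2' r2'" and
      u': "u' \<in> hom C X P'" "r1' \<cdot> u' = f" "r2' \<cdot> u' = g" and
      v': "v' \<in> hom C P' Y" "v' \<cdot> s1' = idm Y" "v' \<cdot> s2' = idm Y" and h: "h = v' \<cdot> u'"
      by blast
    note B' = bp_basic[OF bp']
    obtain phi where phi: "phi \<in> hom C P P'" "phi \<cdot> s1 = s1'" "phi \<cdot> s2 = s2'"
      using bp_copair[OF bp B'(1) B'(3)] by blast
    have "r1' \<cdot> phi = r1"
    proof (rule bp_copair_uniq[OF bp])
      show "r1' \<cdot> phi \<in> hom C P Y" using phi B' by (simp add: hom_iff)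
      show "r1 \<in> hom C P Y" using B by simp
      have "(r1' \<cdot> phi) \<cdot> s1 = r1' \<cdot> (phi \<cdot> s1)" using phi B' B by (simp add: hom_iff)
      then show "(r1' \<cdot> phi) \<cdot> s1 = r1 \<cdot> s1" using phi B' B by simp
      have "(r1' \<cdot> phi) \<cdot> s2 = r1' \<cdot> (phi \<cdot> s2)" using phi B' B by (simp add: hom_iff)
      then show "(r1' \<cdot> phi) \<cdot> s2 = r1 \<cdot> s2" using phi B' B by simp
    qed
    have "r2' \<cdot> phi = r2"
    proof (rule bp_copair_uniq[OF bp])
      show "r2' \<cdot> phi \<in> hom C P Y" using phi B' by (simp add: hom_iff)
      show "r2 \<in> hom C P Y" using B by simp
      have "(r2' \<cdot> phi) \<cdot> s1 = r2' \<cdot> (phi \<cdot> s1)" using phi B' B by (simp add: hom_iff)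
      then show "(r2' \<cdot> phi) \<cdot> s1 = r2 \<cdot> s1" using phi B' B by simp
      have "(r2' \<cdot> phi) \<cdot> s2 = r2' \<cdot> (phi \<cdot> s2)" using phi B' B by (simp add: hom_iff)
      then show "(r2' \<cdot> phi) \<cdot> s2 = r2 \<cdot> s2" using phi B' B by simp
    qed
    have pu: "phi \<cdot> u = u'"
    proof (rule bp_pair_uniq[OF bp'])
      show "phi \<cdot> u \<in> hom C X P'" using phi u by (simp add: hom_iff)
      show "u' \<in> hom C X P'" by fact
      have "r1' \<cdot> (phi \<cdot> u) = (r1' \<cdot> phi) \<cdot> u" using phi B' u by (simp add: hom_iff)
      then show "r1' \<cdot> (phi \<cdot> u) = r1' \<cdot> u'" using \<open>r1' \<cdot> phi = r1\<close> u u' by simp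
      have "r2' \<cdot> (phi \<cdot> u) = (r2' \<cdot> phi) \<cdot> u" using phi B' u by (simp add: hom_iff)
      then show "r2' \<cdot> (phi \<cdot> u) = r2' \<cdot> u'" using \<open>r2' \<cdot> phi = r2\<close> u u' by simp
    qed
    have vp: "v' \<cdot> phi = v"
    proof (rule bp_copair_uniq[OF bp])
      show "v' \<cdot> phi \<in> hom C P Y" using phi v' by (simp add: hom_iff)
      show "v \<in> hom C P Y" by fact
      have "(v' \<cdot> phi) \<cdot> s1 = v' \<cdot> (phi \<cdot> s1)" using phi B v' by (simp add: hom_iff)
      then show "(v' \<cdot> phi) \<cdot> s1 = v \<cdot> s1" using phi v v' by simp
      have "(v' \<cdot> phi) \<cdot> s2 = v' \<cdot> (phi \<cdot> s2)" using phi B v' by (simp add: hom_iff)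
      then show "(v' \<cdot> phi) \<cdot> s2 = v \<cdot> s2" using phi v v' by simp
    qed
    have "v' \<cdot> (phi \<cdot> u) = (v' \<cdot> phi) \<cdot> u" using phi u v' by (simp add: hom_iff)
    then show "h = v \<cdot> u" using h pu vp by simp
  qed
qed

end



context phc
begin

lemma lcancel: "r \<cdot> s = y \<Longrightarrow> arr s \<Longrightarrow> arr r \<Longrightarrow> arr x \<Longrightarrow> dm r = cd s \<Longrightarrow> dm s = cd x
   \<Longrightarrow> r \<cdot> s \<cdot> x = y \<cdot> x"
  by (metis assoc)

lemma nabla_ex:
  assumes bp: "biproduct C Y Y P s1 r1 s2 r2"
  obtains nab where "nab \<in> hom C P Y" "nab \<cdot> s1 = idm Y" "nab \<cdot> s2 = idm Y"
proof -
  have "ob Y" using bp_basic[OF bp] by simp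
  then have "idm Y \<in> hom C Y Y" by (simp add: hom_iff)
  then show ?thesis using bp_copair[OF bp, of "idm Y" Y "idm Y"] that by blast
qed

lemma FL:
  assumes bp: "biproduct C A1 A2 Q t1 p1 t2 p2" and u: "u \<in> hom C X Q" and v: "v \<in> hom C Q Y"
  shows "v \<cdot> u = (v \<cdot> t1 \<cdot> p1 \<cdot> u) \<oplus> (v \<cdot> t2 \<cdot> p2 \<cdot> u)"
proof -
  note B = bp_basic[OF bp]
  note [simp] = B(1-4)[unfolded hom_iff] u[unfolded hom_iff] v[unfolded hom_iff] B(5-11)
  have "ob Y" using hom_obj v by blast
  obtain P s1 r1 s2 r2 where onb: "orthonormal_biproduct C Y Y P s1 r1 s2 r2"
    using onb_ex \<open>ob Y\<close> by blast
  note bpP = onb_bp[OF onb]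
  note BP = bp_basic[OF bpP]
  note [simp] = BP(1-4)[unfolded hom_iff] BP(5-11)
  obtain nab where nab: "nab \<in> hom C P Y" "nab \<cdot> s1 = idm Y" "nab \<cdot> s2 = idm Y"
    using nabla_ex[OF bpP] by blast
  note [simp] = nab(1)[unfolded hom_iff]
  have "v \<cdot> t1 \<cdot> p1 \<in> hom C Q Y" "v \<cdot> t2 \<cdot> p2 \<in> hom C Q Y" by (simp_all add: hom_iff)
  then obtain phi where phi: "phi \<in> hom C Q P" "r1 \<cdot> phi = v \<cdot> t1 \<cdot> p1" "r2 \<cdot> phi = v \<cdot> t2 \<cdot> p2"
    using bp_pair[OF bpP] by blast
  note [simp] = phi(1)[unfolded hom_iff]
  have pt1: "phi \<cdot> t1 = s1 \<cdot> v \<cdot> t1"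
  proof (rule bp_pair_uniq[OF bpP])
    show "phi \<cdot> t1 \<in> hom C A1 P" "s1 \<cdot> v \<cdot> t1 \<in> hom C A1 P" by (simp_all add: hom_iff)
    have "r1 \<cdot> phi \<cdot> t1 = (r1 \<cdot> phi) \<cdot> t1" by simp
    also have "\<dots> = v \<cdot> t1 \<cdot> (p1 \<cdot> t1)" using phi by simp
    also have "\<dots> = v \<cdot> t1" by simp
    finally show "r1 \<cdot> phi \<cdot> t1 = r1 \<cdot> s1 \<cdot> v \<cdot> t1" using lcancel[OF BP(5), of "v \<cdot> t1"] by simp
    have "r2 \<cdot> phi \<cdot> t1 = (r2 \<cdot> phi) \<cdot> t1" by simp
    also have "\<dots> = v \<cdot> t2 \<cdot> (p2 \<cdot> t1)" using phi by simp
    also have "\<dots> = zr A1 Y" by simp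
    finally show "r2 \<cdot> phi \<cdot> t1 = r2 \<cdot> s1 \<cdot> v \<cdot> t1" using lcancel[OF BP(7), of "v \<cdot> t1"] by simp
  qed
  have pt2: "phi \<cdot> t2 = s2 \<cdot> v \<cdot> t2"
  proof (rule bp_pair_uniq[OF bpP])
    show "phi \<cdot> t2 \<in> hom C A2 P" "s2 \<cdot> v \<cdot> t2 \<in> hom C A2 P" by (simp_all add: hom_iff)
    have "r1 \<cdot> phi \<cdot> t2 = (r1 \<cdot> phi) \<cdot> t2" by simp
    also have "\<dots> = v \<cdot> t1 \<cdot> (p1 \<cdot> t2)" using phi by simp
    also have "\<dots> = zr A2 Y" by simp
    finally show "r1 \<cdot> phi \<cdot> t2 = r1 \<cdot> s2 \<cdot> v \<cdot> t2" using lcancel[OF BP(8), of "v \<cdot> t2"] by simp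
    have "r2 \<cdot> phi \<cdot> t2 = (r2 \<cdot> phi) \<cdot> t2" by simp
    also have "\<dots> = v \<cdot> t2 \<cdot> (p2 \<cdot> t2)" using phi by simp
    also have "\<dots> = v \<cdot> t2" by simp
    finally show "r2 \<cdot> phi \<cdot> t2 = r2 \<cdot> s2 \<cdot> v \<cdot> t2" using lcancel[OF BP(6), of "v \<cdot> t2"] by simp
  qed
  have nv: "nab \<cdot> phi = v"
  proof (rule bp_copair_uniq[OF bp])
    show "nab \<cdot> phi \<in> hom C Q Y" "v \<in> hom C Q Y" by (simp_all add: hom_iff)
    have "(nab \<cdot> phi) \<cdot> t1 = nab \<cdot> (phi \<cdot> t1)" by simp
    also have "\<dots> = nab \<cdot> s1 \<cdot> v \<cdot> t1" using pt1 by simp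
    also have "\<dots> = v \<cdot> t1" using lcancel[OF nab(2), of "v \<cdot> t1"] by simp
    finally show "(nab \<cdot> phi) \<cdot> t1 = v \<cdot> t1" .
    have "(nab \<cdot> phi) \<cdot> t2 = nab \<cdot> (phi \<cdot> t2)" by simp
    also have "\<dots> = nab \<cdot> s2 \<cdot> v \<cdot> t2" using pt2 by simp
    also have "\<dots> = v \<cdot> t2" using lcancel[OF nab(3), of "v \<cdot> t2"] by simp
    finally show "(nab \<cdot> phi) \<cdot> t2 = v \<cdot> t2" .
  qed
  have "(v \<cdot> t1 \<cdot> p1 \<cdot> u) \<oplus> (v \<cdot> t2 \<cdot> p2 \<cdot> u) = nab \<cdot> (phi \<cdot> u)"
  proof (rule sum_char[OF bpP _ _ _ _ nab])
    show "v \<cdot> t1 \<cdot> p1 \<cdot> u \<in> hom C X Y" "phi \<cdot> u \<in> hom C X P" by (simp_all add: hom_iff)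
    have "r1 \<cdot> phi \<cdot> u = (r1 \<cdot> phi) \<cdot> u" by simp
    then show "r1 \<cdot> phi \<cdot> u = v \<cdot> t1 \<cdot> p1 \<cdot> u" using phi by simp
    have "r2 \<cdot> phi \<cdot> u = (r2 \<cdot> phi) \<cdot> u" by simp
    then show "r2 \<cdot> phi \<cdot> u = v \<cdot> t2 \<cdot> p2 \<cdot> u" using phi by simp
  qed
  also have "\<dots> = (nab \<cdot> phi) \<cdot> u" by simp
  finally show ?thesis using nv by simp
qed

end



context phc
begin

lemma sum_rep:
  assumes f: "f \<in> hom C X Y" and g: "g \<in> hom C X Y"
  obtains P s1 r1 s2 r2 u nab where "orthonormal_biproduct C Y Y P s1 r1 s2 r2"
    "u \<in> hom C X P" "r1 \<cdot> u = f" "r2 \<cdot> u = g"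
    "nab \<in> hom C P Y" "nab \<cdot> s1 = idm Y" "nab \<cdot> s2 = idm Y" "f \<oplus> g = nab \<cdot> u"
proof -
  have "ob Y" using hom_obj f by blast
  obtain P s1 r1 s2 r2 where onb: "orthonormal_biproduct C Y Y P s1 r1 s2 r2"
    using onb_ex \<open>ob Y\<close> by blast
  note bpP = onb_bp[OF onb]
  obtain nab where nab: "nab \<in> hom C P Y" "nab \<cdot> s1 = idm Y" "nab \<cdot> s2 = idm Y"
    using nabla_ex[OF bpP] by blast
  obtain u where u: "u \<in> hom C X P" "r1 \<cdot> u = f" "r2 \<cdot> u = g"
    using bp_pair[OF bpP f g] by blast
  have "f \<oplus> g = nab \<cdot> u" using sum_char[OF bpP f u nab] .
  then show ?thesis using that onb u nab by blast
qed

lemma add_hom[simp]: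
  assumes f: "f \<in> hom C X Y" and g: "g \<in> hom C X Y"
  shows "f \<oplus> g \<in> hom C X Y"
proof -
  obtain P s1 r1 s2 r2 u nab where "u \<in> hom C X P"
    "nab \<in> hom C P Y" "f \<oplus> g = nab \<cdot> u"
    using sum_rep[OF f g] by blast
  then show ?thesis by (simp add: hom_iff)
qed

lemma add_zero_r:
  assumes f: "f \<in> hom C X Y"
  shows "f \<oplus> zr X Y = f"
proof -
  have "ob Y" "ob X" using hom_obj f by blast+
  obtain P s1 r1 s2 r2 where onb: "orthonormal_biproduct C Y Y P s1 r1 s2 r2"
    using onb_ex \<open>ob Y\<close> by blast
  note bpP = onb_bp[OF onb]
  note BP = bp_basic[OF bpP]
  note [simp] = BP(1-4)[unfolded hom_iff] BP(5-11) f[unfolded hom_iff] \<open>ob X\<close>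
  obtain nab where nab: "nab \<in> hom C P Y" "nab \<cdot> s1 = idm Y" "nab \<cdot> s2 = idm Y"
    using nabla_ex[OF bpP] by blast
  note [simp] = nab(1)[unfolded hom_iff]
  have "f \<oplus> zr X Y = nab \<cdot> (s1 \<cdot> f)"
  proof (rule sum_char[OF bpP f _ _ _ nab])
    show "s1 \<cdot> f \<in> hom C X P" by (simp add: hom_iff)
    show "r1 \<cdot> s1 \<cdot> f = f" using lcancel[OF BP(5), of f] by simp
    show "r2 \<cdot> s1 \<cdot> f = zr X Y" using lcancel[OF BP(7), of f] by simp
  qed
  also have "\<dots> = f" using lcancel[OF nab(2), of f] by simp
  finally show ?thesis .
qed

lemma add_comm:
  assumes f: "f \<in> hom C X Y" and g: "g \<in> hom C X Y"
  shows "f \<oplus> g = g \<oplus> f"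
proof -
  obtain P s1 r1 s2 r2 u nab where onb: "orthonormal_biproduct C Y Y P s1 r1 s2 r2" and
    u: "u \<in> hom C X P" "r1 \<cdot> u = f" "r2 \<cdot> u = g" and
    nab: "nab \<in> hom C P Y" "nab \<cdot> s1 = idm Y" "nab \<cdot> s2 = idm Y" and e: "f \<oplus> g = nab \<cdot> u"
    using sum_rep[OF f g] by blast
  have "g \<oplus> f = nab \<cdot> u"
    using sum_char[OF bp_swap[OF onb_bp[OF onb]] g u(1) u(3) u(2) nab(1) nab(3) nab(2)] .
  then show ?thesis using e by simp
qed

lemma add_zero_l:
  assumes f: "f \<in> hom C X Y"
  shows "zr X Y \<oplus> f = f"
proof -
  have "ob Y" "ob X" using hom_obj f by blast+
  then show ?thesis using add_comm[OF f, of "zr X Y"] add_zero_r[OF f] by simp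
qed

lemma distrib_r:
  assumes f: "f \<in> hom C X Y" and g: "g \<in> hom C X Y" and k: "k \<in> hom C W X"
  shows "(f \<oplus> g) \<cdot> k = (f \<cdot> k) \<oplus> (g \<cdot> k)"
proof -
  obtain P s1 r1 s2 r2 u nab where onb: "orthonormal_biproduct C Y Y P s1 r1 s2 r2" and
    u: "u \<in> hom C X P" "r1 \<cdot> u = f" "r2 \<cdot> u = g" and
    nab: "nab \<in> hom C P Y" "nab \<cdot> s1 = idm Y" "nab \<cdot> s2 = idm Y" and e: "f \<oplus> g = nab \<cdot> u"
    using sum_rep[OF f g] by blast
  note bpP = onb_bp[OF onb]
  note BP = bp_basic[OF bpP]
  note [simp] = BP(1-4)[unfolded hom_iff] u(1)[unfolded hom_iff] k[unfolded hom_iff]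
    nab(1)[unfolded hom_iff]
  have fk: "f \<cdot> k \<in> hom C W Y" using f by (simp add: hom_iff)
  have "(f \<cdot> k) \<oplus> (g \<cdot> k) = nab \<cdot> (u \<cdot> k)"
  proof (rule sum_char[OF bpP fk _ _ _ nab])
    show "u \<cdot> k \<in> hom C W P" by (simp add: hom_iff)
    show "r1 \<cdot> u \<cdot> k = f \<cdot> k" using lcancel[OF u(2), of k] by simp
    show "r2 \<cdot> u \<cdot> k = g \<cdot> k" using lcancel[OF u(3), of k] by simp
  qed
  then show ?thesis using e by simp
qed

lemma distrib_l:
  assumes f: "f \<in> hom C X Y" and g: "g \<in> hom C X Y" and k: "k \<in> hom C Y Z"
  shows "k \<cdot> (f \<oplus> g) = (k \<cdot> f) \<oplus> (k \<cdot> g)"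
proof -
  obtain P s1 r1 s2 r2 u nab where onb: "orthonormal_biproduct C Y Y P s1 r1 s2 r2" and
    u: "u \<in> hom C X P" "r1 \<cdot> u = f" "r2 \<cdot> u = g" and
    nab: "nab \<in> hom C P Y" "nab \<cdot> s1 = idm Y" "nab \<cdot> s2 = idm Y" and e: "f \<oplus> g = nab \<cdot> u"
    using sum_rep[OF f g] by blast
  note bpP = onb_bp[OF onb]
  note BP = bp_basic[OF bpP]
  note [simp] = BP(1-4)[unfolded hom_iff] u(1)[unfolded hom_iff] k[unfolded hom_iff]
    nab(1)[unfolded hom_iff] f[unfolded hom_iff] g[unfolded hom_iff]
  have kn: "k \<cdot> nab \<in> hom C P Z" by (simp add: hom_iff)
  have "(k \<cdot> nab) \<cdot> u = (k \<cdot> nab \<cdot> s1 \<cdot> r1 \<cdot> u) \<oplus> (k \<cdot> nab \<cdot> s2 \<cdot> r2 \<cdot> u)"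
    using FL[OF bpP u(1) kn] by simp
  also have "k \<cdot> nab \<cdot> s1 \<cdot> r1 \<cdot> u = k \<cdot> f" using lcancel[OF nab(2), of "r1 \<cdot> u"] u by simp
  also have "k \<cdot> nab \<cdot> s2 \<cdot> r2 \<cdot> u = k \<cdot> g" using lcancel[OF nab(3), of "r2 \<cdot> u"] u by simp
  finally show ?thesis using e by simp
qed

lemma add_assoc:
  assumes f: "f \<in> hom C X Y" and g: "g \<in> hom C X Y" and h: "h \<in> hom C X Y"
  shows "(f \<oplus> g) \<oplus> h = f \<oplus> (g \<oplus> h)"
proof -
  obtain P s1 r1 s2 r2 u nab where onb: "orthonormal_biproduct C Y Y P s1 r1 s2 r2" and
    u: "u \<in> hom C X P" "r1 \<cdot> u = f" "r2 \<cdot> u = g" and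
    nab: "nab \<in> hom C P Y" "nab \<cdot> s1 = idm Y" "nab \<cdot> s2 = idm Y" and e: "f \<oplus> g = nab \<cdot> u"
    using sum_rep[OF f g] by blast
  note bpP = onb_bp[OF onb]
  note BP = bp_basic[OF bpP]
  have "ob X" using hom_obj f by blast
  note [simp] = BP(1-4)[unfolded hom_iff] BP(5-11) u(1)[unfolded hom_iff] h[unfolded hom_iff]
    nab(1)[unfolded hom_iff] \<open>ob X\<close>
  have sh: "s2 \<cdot> h \<in> hom C X P" by (simp add: hom_iff)
  have h': "nab \<cdot> s2 \<cdot> h = h" using lcancel[OF nab(3), of h] by simp
  have "(f \<oplus> g) \<oplus> h = (nab \<cdot> u) \<oplus> (nab \<cdot> s2 \<cdot> h)" using e h' by simp
  also have "\<dots> = nab \<cdot> (u \<oplus> (s2 \<cdot> h))" using distrib_l[OF u(1) sh nab(1)] by simp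
  also have "\<dots> = f \<oplus> (g \<oplus> h)"
  proof (rule sum_char[OF bpP f _ _ _ nab, symmetric])
    show "u \<oplus> s2 \<cdot> h \<in> hom C X P" using u(1) sh by simp
    have "r1 \<cdot> (u \<oplus> s2 \<cdot> h) = (r1 \<cdot> u) \<oplus> (r1 \<cdot> s2 \<cdot> h)" using distrib_l[OF u(1) sh BP(2)] .
    also have "r1 \<cdot> s2 \<cdot> h = zr X Y" using lcancel[OF BP(8), of h] by simp
    finally show "r1 \<cdot> (u \<oplus> s2 \<cdot> h) = f" using add_zero_r[OF f] u by simp
    have "r2 \<cdot> (u \<oplus> s2 \<cdot> h) = (r2 \<cdot> u) \<oplus> (r2 \<cdot> s2 \<cdot> h)" using distrib_l[OF u(1) sh BP(4)] .
    also have "r2 \<cdot> s2 \<cdot> h = h" using lcancel[OF BP(6), of h] by simp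
    finally show "r2 \<cdot> (u \<oplus> s2 \<cdot> h) = g \<oplus> h" using u by simp
  qed
  finally show ?thesis .
qed

lemma add_cancel:
  assumes a: "a \<in> hom C X Y" and b: "b \<in> hom C X Y" and c: "c \<in> hom C X Y"
    and "a \<oplus> c = zr X Y" "b \<oplus> c = zr X Y"
  shows "a = b"
proof -
  have "a = a \<oplus> (b \<oplus> c)" using add_zero_r[OF a] assms by simp
  also have "\<dots> = a \<oplus> (c \<oplus> b)" using add_comm[OF b c] by simp
  also have "\<dots> = (a \<oplus> c) \<oplus> b" using add_assoc[OF a c b] by simp
  also have "\<dots> = b" using add_zero_l[OF b] assms by simp
  finally show ?thesis .
qed

end



context phc
begin

lemma R3: "arr f \<Longrightarrow> \<exists>m. is_kernel C f m \<and> m\<^sup>\<dagger> \<cdot> m = idm (dm m)"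
  using phc unfolding pre_hilbert_star_category_def by blast

lemma R4: "orthonormal_biproduct C X X P s1 r1 s2 r2 \<Longrightarrow> d \<in> hom C X P \<Longrightarrow>
    r1 \<cdot> d = idm X \<Longrightarrow> r2 \<cdot> d = idm X \<Longrightarrow> \<exists>f. is_kernel C f d"
  using phc unfolding pre_hilbert_star_category_def by blast

lemma ker_basic:
  assumes "is_kernel C f m"
  shows "arr f" "arr m" "cd m = dm f" "f \<cdot> m = zr (dm m) (cd f)"
  using assms unfolding is_kernel_def by auto

lemma ker_factor:
  assumes "is_kernel C f m" "g \<in> hom C W (dm f)" "f \<cdot> g = zr W (cd f)"
  obtains h where "h \<in> hom C W (dm m)" "m \<cdot> h = g"
proof -
  have "ob W" using hom_obj assms(2) by blast
  then show ?thesis using assms that unfolding is_kernel_def by blast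
qed

lemma n_exists:
  assumes Y: "ob Y"
  shows "\<exists>n. n \<in> hom C Y Y \<and> idm Y \<oplus> n = zr Y Y"
proof -
  obtain P s1 r1 s2 r2 where onb: "orthonormal_biproduct C Y Y P s1 r1 s2 r2"
    using onb_ex Y by blast
  note bpP = onb_bp[OF onb]
  note BP = bp_basic[OF bpP]
  have rs: "r1 = s1\<^sup>\<dagger>" "r2 = s2\<^sup>\<dagger>" using onb_r[OF onb] by auto
  note [simp] = BP(1-4)[unfolded hom_iff] BP(5-11)
  have idY: "idm Y \<in> hom C Y Y" using Y by (simp add: hom_iff)
  obtain Dl where Dl: "Dl \<in> hom C Y P" "r1 \<cdot> Dl = idm Y" "r2 \<cdot> Dl = idm Y"
    using bp_pair[OF bpP idY idY] by blast
  note [simp] = Dl(1)[unfolded hom_iff]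
  obtain f where kf: "is_kernel C f Dl" using R4[OF onb Dl] by blast
  note KF = ker_basic[OF kf]
  have [simp]: "arr f" using KF(1) .
  have [simp]: "dm f = P" using KF(3) Dl(1) unfolding hom_iff by simp
  define Y' where "Y' = cd f"
  have [simp]: "cd f = Y'" by (simp add: Y'_def)
  have fD: "f \<cdot> Dl = zr Y Y'" using KF by simp
  have D: "Dl\<^sup>\<dagger> \<in> hom C P Y" by (simp add: hom_iff)
  have "arr (Dl\<^sup>\<dagger>)" by simp
  then obtain k where kk: "is_kernel C (Dl\<^sup>\<dagger>) k" and kiso: "k\<^sup>\<dagger> \<cdot> k = idm (dm k)"
    using R3[of "Dl\<^sup>\<dagger>"] by blast
  note KK = ker_basic[OF kk]
  define K where "K = dm k"
  have [simp]: "arr k" using KK(2) .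
  have [simp]: "dm k = K" by (simp add: K_def)
  have [simp]: "cd k = P" using KK(3) by simp
  have [simp]: "ob K" using arr_obj(1)[of k] by simp
  have [simp]: "ob Y'" using arr_obj(2)[of f] by simp
  have Dk: "Dl\<^sup>\<dagger> \<cdot> k = zr K Y" using KK by simp
  have "Dl\<^sup>\<dagger> \<cdot> f\<^sup>\<dagger> = (f \<cdot> Dl)\<^sup>\<dagger>" by simp
  also have "\<dots> = zr Y' Y" using fD by simp
  finally have "Dl\<^sup>\<dagger> \<cdot> f\<^sup>\<dagger> = zr Y' (cd (Dl\<^sup>\<dagger>))" by simp
  moreover have "f\<^sup>\<dagger> \<in> hom C Y' (dm (Dl\<^sup>\<dagger>))" by (simp add: hom_iff)
  ultimately obtain t where t: "t \<in> hom C Y' (dm k)" "k \<cdot> t = f\<^sup>\<dagger>"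
    using ker_factor[OF kk] by blast
  note [simp] = t(1)[unfolded hom_iff]
  have ftk: "f = t\<^sup>\<dagger> \<cdot> k\<^sup>\<dagger>"
  proof -
    have "f = (f\<^sup>\<dagger>)\<^sup>\<dagger>" by simp
    also have "\<dots> = (k \<cdot> t)\<^sup>\<dagger>" using t by simp
    also have "\<dots> = t\<^sup>\<dagger> \<cdot> k\<^sup>\<dagger>" by simp
    finally show ?thesis .
  qed
  define k1 where "k1 = r1 \<cdot> k"
  define k2 where "k2 = r2 \<cdot> k"
  have k1: "k1 \<in> hom C K Y" and k2: "k2 \<in> hom C K Y" by (simp_all add: k1_def k2_def hom_iff)
  note [simp] = k1[unfolded hom_iff] k2[unfolded hom_iff]
  have kh: "k \<in> hom C K P" "k\<^sup>\<dagger> \<in> hom C P K" by (simp_all add: hom_iff)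
  have Ds1: "Dl\<^sup>\<dagger> \<cdot> s1 = idm Y"
  proof -
    have "Dl\<^sup>\<dagger> \<cdot> s1 = Dl\<^sup>\<dagger> \<cdot> r1\<^sup>\<dagger>" using rs by simp
    also have "\<dots> = (r1 \<cdot> Dl)\<^sup>\<dagger>" by simp
    finally show ?thesis using Dl Y by simp
  qed
  have Ds2: "Dl\<^sup>\<dagger> \<cdot> s2 = idm Y"
  proof -
    have "Dl\<^sup>\<dagger> \<cdot> s2 = Dl\<^sup>\<dagger> \<cdot> r2\<^sup>\<dagger>" using rs by simp
    also have "\<dots> = (r2 \<cdot> Dl)\<^sup>\<dagger>" by simp
    finally show ?thesis using Dl Y by simp
  qed
  have ks1: "k\<^sup>\<dagger> \<cdot> s1 = k1\<^sup>\<dagger>" unfolding k1_def using rs by simp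
  have ks2: "k\<^sup>\<dagger> \<cdot> s2 = k2\<^sup>\<dagger>" unfolding k2_def using rs by simp
  have E1: "k1 \<oplus> k2 = zr K Y"
  proof -
    have "Dl\<^sup>\<dagger> \<cdot> k = (Dl\<^sup>\<dagger> \<cdot> s1 \<cdot> r1 \<cdot> k) \<oplus> (Dl\<^sup>\<dagger> \<cdot> s2 \<cdot> r2 \<cdot> k)" using FL[OF bpP kh(1) D] .
    also have "Dl\<^sup>\<dagger> \<cdot> s1 \<cdot> r1 \<cdot> k = k1" using lcancel[OF Ds1, of "r1 \<cdot> k"] by (simp add: k1_def)
    also have "Dl\<^sup>\<dagger> \<cdot> s2 \<cdot> r2 \<cdot> k = k2" using lcancel[OF Ds2, of "r2 \<cdot> k"] by (simp add: k2_def)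
    finally show ?thesis using Dk by simp
  qed
  have E2: "(k1\<^sup>\<dagger> \<cdot> k1) \<oplus> (k2\<^sup>\<dagger> \<cdot> k2) = idm K"
  proof -
    have "k\<^sup>\<dagger> \<cdot> k = (k\<^sup>\<dagger> \<cdot> s1 \<cdot> r1 \<cdot> k) \<oplus> (k\<^sup>\<dagger> \<cdot> s2 \<cdot> r2 \<cdot> k)" using FL[OF bpP kh(1) kh(2)] .
    also have "k\<^sup>\<dagger> \<cdot> s1 \<cdot> r1 \<cdot> k = k1\<^sup>\<dagger> \<cdot> k1" using lcancel[OF ks1, of "r1 \<cdot> k"] by (simp add: k1_def)
    also have "k\<^sup>\<dagger> \<cdot> s2 \<cdot> r2 \<cdot> k = k2\<^sup>\<dagger> \<cdot> k2" using lcancel[OF ks2, of "r2 \<cdot> k"] by (simp add: k2_def)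
    finally show ?thesis using kiso by simp
  qed
  have E3: "k1\<^sup>\<dagger> \<oplus> k2\<^sup>\<dagger> = zr Y K"
  proof -
    have "k\<^sup>\<dagger> \<cdot> Dl = (k\<^sup>\<dagger> \<cdot> s1 \<cdot> r1 \<cdot> Dl) \<oplus> (k\<^sup>\<dagger> \<cdot> s2 \<cdot> r2 \<cdot> Dl)" using FL[OF bpP Dl(1) kh(2)] .
    also have "k\<^sup>\<dagger> \<cdot> s1 \<cdot> r1 \<cdot> Dl = k1\<^sup>\<dagger>" using lcancel[OF ks1, of "r1 \<cdot> Dl"] Dl by simp
    also have "k\<^sup>\<dagger> \<cdot> s2 \<cdot> r2 \<cdot> Dl = k2\<^sup>\<dagger>" using lcancel[OF ks2, of "r2 \<cdot> Dl"] Dl by simp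
    finally have "k\<^sup>\<dagger> \<cdot> Dl = k1\<^sup>\<dagger> \<oplus> k2\<^sup>\<dagger>" .
    moreover have "k\<^sup>\<dagger> \<cdot> Dl = (Dl\<^sup>\<dagger> \<cdot> k)\<^sup>\<dagger>" by simp
    ultimately show ?thesis using Dk by simp
  qed
  have k1s: "k1\<^sup>\<dagger> \<in> hom C Y K" "k2\<^sup>\<dagger> \<in> hom C Y K" by (simp_all add: hom_iff)
  define a where "a = k1\<^sup>\<dagger> \<cdot> k1"
  define b where "b = k2\<^sup>\<dagger> \<cdot> k2"
  define c where "c = k2\<^sup>\<dagger> \<cdot> k1"
  have abc: "a \<in> hom C K K" "b \<in> hom C K K" "c \<in> hom C K K"
    by (simp_all add: a_def b_def c_def hom_iff)
  have ac: "a \<oplus> c = zr K K"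
  proof -
    have "(k1\<^sup>\<dagger> \<oplus> k2\<^sup>\<dagger>) \<cdot> k1 = a \<oplus> c" using distrib_r[OF k1s k1] by (simp add: a_def c_def)
    then show ?thesis using E3 by simp
  qed
  have bc: "b \<oplus> c = zr K K"
  proof -
    have "k2\<^sup>\<dagger> \<cdot> (k1 \<oplus> k2) = c \<oplus> b" using distrib_l[OF k1 k2 k1s(2)] by (simp add: b_def c_def)
    then show ?thesis using E1 add_comm[OF abc(2,3)] by simp
  qed
  have "a = b" using add_cancel[OF abc ac bc] .
  then have aa: "a \<oplus> a = idm K" using E2 by (simp add: a_def b_def)
  define d where "d = k1\<^sup>\<dagger> \<oplus> k1\<^sup>\<dagger>"
  have dh: "d \<in> hom C Y K" using k1s by (simp add: d_def)
  note [simp] = dh[unfolded hom_iff]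
  define e where "e = k1 \<cdot> d"
  have eh: "e \<in> hom C Y Y" by (simp add: e_def hom_iff)
  have k1e: "k1\<^sup>\<dagger> \<cdot> e = k1\<^sup>\<dagger>"
  proof -
    have "k1\<^sup>\<dagger> \<cdot> e = a \<cdot> d" by (simp add: e_def a_def)
    also have "\<dots> = (a \<cdot> k1\<^sup>\<dagger>) \<oplus> (a \<cdot> k1\<^sup>\<dagger>)" unfolding d_def using distrib_l[OF k1s(1) k1s(1) abc(1)] .
    also have "\<dots> = (a \<oplus> a) \<cdot> k1\<^sup>\<dagger>" using distrib_r[OF abc(1) abc(1) k1s(1)] by simp
    finally show ?thesis using aa by simp
  qed
  obtain u0 where u0: "u0 \<in> hom C Y P" "r1 \<cdot> u0 = e" "r2 \<cdot> u0 = idm Y"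
    using bp_pair[OF bpP eh idY] by blast
  note [simp] = u0(1)[unfolded hom_iff]
  have ku0: "k\<^sup>\<dagger> \<cdot> u0 = zr Y K"
  proof -
    have "k\<^sup>\<dagger> \<cdot> u0 = (k\<^sup>\<dagger> \<cdot> s1 \<cdot> r1 \<cdot> u0) \<oplus> (k\<^sup>\<dagger> \<cdot> s2 \<cdot> r2 \<cdot> u0)" using FL[OF bpP u0(1) kh(2)] .
    also have "k\<^sup>\<dagger> \<cdot> s1 \<cdot> r1 \<cdot> u0 = k1\<^sup>\<dagger>" using lcancel[OF ks1, of "r1 \<cdot> u0"] u0 k1e eh
      by (simp add: hom_iff)
    also have "k\<^sup>\<dagger> \<cdot> s2 \<cdot> r2 \<cdot> u0 = k2\<^sup>\<dagger>" using lcancel[OF ks2, of "r2 \<cdot> u0"] u0 Y by simp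
    finally show ?thesis using E3 by simp
  qed
  have "f \<cdot> u0 = t\<^sup>\<dagger> \<cdot> k\<^sup>\<dagger> \<cdot> u0" using ftk by simp
  also have "\<dots> = zr Y Y'" using ku0 by simp
  finally have "f \<cdot> u0 = zr Y (cd f)" by simp
  moreover have "u0 \<in> hom C Y (dm f)" using u0 by simp
  ultimately obtain h where h: "h \<in> hom C Y (dm Dl)" "Dl \<cdot> h = u0"
    using ker_factor[OF kf] by blast
  note [simp] = h(1)[unfolded hom_iff]
  have "e = r1 \<cdot> Dl \<cdot> h" using u0 h by simp
  also have "\<dots> = h" using lcancel[OF Dl(2), of h] by simp
  also have "\<dots> = r2 \<cdot> Dl \<cdot> h" using lcancel[OF Dl(3), of h] by simp
  also have "\<dots> = idm Y" using u0 h by simp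
  finally have e1: "e = idm Y" .
  define n where "n = k2 \<cdot> d"
  have nh: "n \<in> hom C Y Y" by (simp add: n_def hom_iff)
  have "idm Y \<oplus> n = (k1 \<cdot> d) \<oplus> (k2 \<cdot> d)" using e1 by (simp add: e_def n_def)
  also have "\<dots> = (k1 \<oplus> k2) \<cdot> d" using distrib_r[OF k1 k2 dh] by simp
  also have "\<dots> = zr Y Y" using E1 by simp
  finally show ?thesis using nh by blast
qed

lemma neg_ex:
  assumes f: "f \<in> hom C X Y"
  shows "\<exists>g. g \<in> hom C X Y \<and> f \<oplus> g = zr X Y"
proof -
  have "ob Y" "ob X" using hom_obj f by blast+
  then obtain n where n: "n \<in> hom C Y Y" "idm Y \<oplus> n = zr Y Y" using n_exists by blast
  have idY: "idm Y \<in> hom C Y Y" using \<open>ob Y\<close> by (simp add: hom_iff)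
  note [simp] = f[unfolded hom_iff] n(1)[unfolded hom_iff] \<open>ob X\<close> \<open>ob Y\<close>
  have "(idm Y \<oplus> n) \<cdot> f = (idm Y \<cdot> f) \<oplus> (n \<cdot> f)" using distrib_r[OF idY n(1) f] .
  also have "idm Y \<cdot> f = f" by simp
  finally have "f \<oplus> (n \<cdot> f) = zr Y Y \<cdot> f" using n(2) by simp
  also have "\<dots> = zr X Y" by simp
  finally have "f \<oplus> (n \<cdot> f) = zr X Y" .
  moreover have "n \<cdot> f \<in> hom C X Y" by (simp add: hom_iff)
  ultimately show ?thesis by blast
qed

lemma hneg:
  assumes f: "f \<in> hom C X Y"
  shows "hneg C f \<in> hom C X Y" "f \<oplus> hneg C f = zr X Y"
proof -
  have df: "dm f = X" "cd f = Y" using f by (simp_all add: hom_iff)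
  have "\<exists>!g. g \<in> hom C X Y \<and> f \<oplus> g = zr X Y"
  proof -
    obtain g where g: "g \<in> hom C X Y" "f \<oplus> g = zr X Y" using neg_ex[OF f] by blast
    moreover have "g' = g" if "g' \<in> hom C X Y" "f \<oplus> g' = zr X Y" for g'
    proof (rule add_cancel[OF that(1) g(1) f])
      show "g' \<oplus> f = zr X Y" using add_comm[OF f that(1)] that(2) by simp
      show "g \<oplus> f = zr X Y" using add_comm[OF f g(1)] g(2) by simp
    qed
    ultimately show ?thesis by blast
  qed
  then have "hneg C f \<in> hom C X Y \<and> f \<oplus> hneg C f = zr X Y"
    unfolding hneg_def df by (rule theI')
  then show "hneg C f \<in> hom C X Y" "f \<oplus> hneg C f = zr X Y" by auto
qed

end



context phc
begin

lemma main:
  assumes A: "ob A" and a: "a \<in> hom C A A" and b: "b \<in> hom C A A"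
    and ha: "hermitian C a" and hb: "hermitian C b"
    and le: "canon_le C A b a" and pr: "canon_prec C A (zr A A) b"
  shows "canon_prec C A (zr A A) a"
proof -
  note [simp] = a[unfolded hom_iff] b[unfolded hom_iff] A
  have z0: "zr A A \<in> hom C A A" by simp
  obtain Y y where Y: "ob Y" and y: "y \<in> hom C A Y" and ab: "hminus C a b = y\<^sup>\<dagger> \<cdot> y"
    using le unfolding canon_le_def by blast
  obtain Z z where Z: "ob Z" and z: "z \<in> hom C A Z" and b0: "hminus C b (zr A A) = z\<^sup>\<dagger> \<cdot> z"
    and binv0: "invertible_mor C (hminus C b (zr A A))"
    using pr unfolding canon_prec_def canon_le_def by blast
  note [simp] = y[unfolded hom_iff] z[unfolded hom_iff] Y Z
  have hn0: "hneg C (zr A A) = zr A A"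
  proof -
    have "zr A A \<oplus> hneg C (zr A A) = zr A A" using hneg(2)[OF z0] .
    then show ?thesis using add_zero_l[OF hneg(1)[OF z0]] by simp
  qed
  have m0: "hminus C x (zr A A) = x" if "x \<in> hom C A A" for x
    unfolding hminus_def hn0 using add_zero_r[OF that] .
  have bzz: "b = z\<^sup>\<dagger> \<cdot> z" using b0 m0[OF b] by simp
  have binv: "invertible_mor C b" using binv0 m0[OF b] by simp
  have yy: "y\<^sup>\<dagger> \<cdot> y \<in> hom C A A" by (simp add: hom_iff)
  have ayb: "a = (y\<^sup>\<dagger> \<cdot> y) \<oplus> b"
  proof -
    note nb = hneg[OF b]
    have "a = a \<oplus> zr A A" using add_zero_r[OF a] by simp
    also have "zr A A = hneg C b \<oplus> b" using nb add_comm[OF b nb(1)] by simp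
    also have "a \<oplus> (hneg C b \<oplus> b) = (a \<oplus> hneg C b) \<oplus> b" using add_assoc[OF a nb(1) b] by simp
    also have "a \<oplus> hneg C b = y\<^sup>\<dagger> \<cdot> y" using ab unfolding hminus_def .
    finally show ?thesis .
  qed
  obtain Q t1 p1 t2 p2 where onb: "orthonormal_biproduct C Z Y Q t1 p1 t2 p2"
    using onb_ex Z Y by blast
  note bpQ = onb_bp[OF onb]
  note BQ = bp_basic[OF bpQ]
  have ps: "p1 = t1\<^sup>\<dagger>" "p2 = t2\<^sup>\<dagger>" using onb_r[OF onb] by auto
  note [simp] = BQ(1-4)[unfolded hom_iff] BQ(5-11)
  obtain w where w: "w \<in> hom C A Q" "p1 \<cdot> w = z" "p2 \<cdot> w = y"
    using bp_pair[OF bpQ z y] by blast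
  note [simp] = w(1)[unfolded hom_iff]
  have wt1: "w\<^sup>\<dagger> \<cdot> t1 = z\<^sup>\<dagger>"
  proof -
    have "z\<^sup>\<dagger> = (t1\<^sup>\<dagger> \<cdot> w)\<^sup>\<dagger>" using w ps by simp
    also have "\<dots> = w\<^sup>\<dagger> \<cdot> t1" by simp
    finally show ?thesis by simp
  qed
  have wt2: "w\<^sup>\<dagger> \<cdot> t2 = y\<^sup>\<dagger>"
  proof -
    have "y\<^sup>\<dagger> = (t2\<^sup>\<dagger> \<cdot> w)\<^sup>\<dagger>" using w ps by simp
    also have "\<dots> = w\<^sup>\<dagger> \<cdot> t2" by simp
    finally show ?thesis by simp
  qed
  have ws: "w\<^sup>\<dagger> \<in> hom C Q A" by (simp add: hom_iff)
  have aww: "w\<^sup>\<dagger> \<cdot> w = a"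
  proof -
    have "w\<^sup>\<dagger> \<cdot> w = (w\<^sup>\<dagger> \<cdot> t1 \<cdot> p1 \<cdot> w) \<oplus> (w\<^sup>\<dagger> \<cdot> t2 \<cdot> p2 \<cdot> w)" using FL[OF bpQ w(1) ws] .
    also have "w\<^sup>\<dagger> \<cdot> t1 \<cdot> p1 \<cdot> w = z\<^sup>\<dagger> \<cdot> z" using lcancel[OF wt1, of "p1 \<cdot> w"] w by simp
    also have "w\<^sup>\<dagger> \<cdot> t2 \<cdot> p2 \<cdot> w = y\<^sup>\<dagger> \<cdot> y" using lcancel[OF wt2, of "p2 \<cdot> w"] w by simp
    also have "(z\<^sup>\<dagger> \<cdot> z) \<oplus> (y\<^sup>\<dagger> \<cdot> y) = (y\<^sup>\<dagger> \<cdot> y) \<oplus> (z\<^sup>\<dagger> \<cdot> z)"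
      using add_comm[OF _ yy, of "z\<^sup>\<dagger> \<cdot> z"] by (simp add: hom_iff)
    finally show ?thesis using ayb bzz by simp
  qed
  obtain bi where bi: "bi \<in> hom C A A" "bi \<cdot> b = idm A" "b \<cdot> bi = idm A"
    using binv unfolding invertible_mor_def by auto
  note [simp] = bi(1)[unfolded hom_iff]
  define l where "l = bi \<cdot> z\<^sup>\<dagger> \<cdot> p1"
  have lh: "l \<in> hom C Q A" by (simp add: l_def hom_iff)
  note [simp] = lh[unfolded hom_iff]
  have lw: "l \<cdot> w = idm A"
  proof -
    have "l \<cdot> w = bi \<cdot> z\<^sup>\<dagger> \<cdot> p1 \<cdot> w" by (simp add: l_def)
    also have "\<dots> = bi \<cdot> b" using w bzz by simp
    finally show ?thesis using bi by simp
  qed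
  define wl where "wl = w \<cdot> l"
  have wlh: "wl \<in> hom C Q Q" by (simp add: wl_def hom_iff)
  note nwl = hneg[OF wlh]
  note [simp] = nwl(1)[unfolded hom_iff]
  have idQ: "idm Q \<in> hom C Q Q" by (simp add: hom_iff)
  define E where "E = hminus C (idm Q) wl"
  have Eh: "E \<in> hom C Q Q" unfolding E_def hminus_def using idQ nwl(1) by simp
  note [simp] = Eh[unfolded hom_iff]
  have Edist: "E \<cdot> x = x \<oplus> (hneg C wl \<cdot> x)" if "x \<in> hom C X Q" for x X
  proof -
    have [simp]: "arr x" "cd x = Q" using that by (simp_all add: hom_iff)
    have "E \<cdot> x = (idm Q \<cdot> x) \<oplus> (hneg C wl \<cdot> x)"
      unfolding E_def hminus_def using distrib_r[OF idQ nwl(1) that] .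
    then show ?thesis by simp
  qed
  have wldist: "(wl \<cdot> x) \<oplus> (hneg C wl \<cdot> x) = zr X Q" if "x \<in> hom C X Q" for x X
  proof -
    have [simp]: "arr x" "cd x = Q" "dm x = X" "ob X" using that hom_obj by (auto simp: hom_iff)
    have "(wl \<oplus> hneg C wl) \<cdot> x = (wl \<cdot> x) \<oplus> (hneg C wl \<cdot> x)" using distrib_r[OF wlh nwl(1) that] .
    then show ?thesis using nwl(2) by simp
  qed
  have "arr E" by simp
  then obtain m where km: "is_kernel C E m" and miso: "m\<^sup>\<dagger> \<cdot> m = idm (dm m)"
    using R3[of E] by blast
  note KM = ker_basic[OF km]
  define M where "M = dm m"
  have [simp]: "arr m" using KM(2) .
  have [simp]: "dm m = M" by (simp add: M_def)
  have [simp]: "cd m = Q" using KM(3) by simp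
  have [simp]: "ob M" using arr_obj(1)[of m] by simp
  have mh: "m \<in> hom C M Q" by (simp add: hom_iff)
  have wlw: "wl \<cdot> w = w" unfolding wl_def using lw by simp
  have Ew: "E \<cdot> w = zr A (cd E)"
  proof -
    have "E \<cdot> w = w \<oplus> (hneg C wl \<cdot> w)" using Edist[OF w(1)] .
    also have "\<dots> = zr A Q" using wldist[OF w(1)] wlw by simp
    finally show ?thesis by simp
  qed
  have wE: "w \<in> hom C A (dm E)" using w(1) by simp
  obtain h where h: "h \<in> hom C A (dm m)" "m \<cdot> h = w"
    using ker_factor[OF km wE Ew] by blast
  note [simp] = h(1)[unfolded hom_iff]
  have mwl: "m = w \<cdot> l \<cdot> m"
  proof -
    have wlm: "wl \<cdot> m \<in> hom C M Q" by (simp add: wl_def hom_iff)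
    have nm: "hneg C wl \<cdot> m \<in> hom C M Q" by (simp add: hom_iff)
    have "m \<oplus> (hneg C wl \<cdot> m) = zr M Q" using Edist[OF mh] KM(4) by simp
    then have "m = wl \<cdot> m" using add_cancel[OF mh wlm nm _ wldist[OF mh]] by simp
    then show ?thesis by (simp add: wl_def)
  qed
  define g where "g = l \<cdot> m"
  have gh: "g \<in> hom C M A" by (simp add: g_def hom_iff)
  note [simp] = gh[unfolded hom_iff]
  have hg: "h \<cdot> g = idm M"
  proof -
    have "h \<cdot> g = (m\<^sup>\<dagger> \<cdot> m) \<cdot> h \<cdot> g" using miso by simp
    also have "\<dots> = m\<^sup>\<dagger> \<cdot> (m \<cdot> h) \<cdot> g" by simp
    also have "\<dots> = m\<^sup>\<dagger> \<cdot> w \<cdot> l \<cdot> m" using h by (simp add: g_def)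
    also have "\<dots> = m\<^sup>\<dagger> \<cdot> m" using mwl by simp
    finally show ?thesis using miso by simp
  qed
  have gh1: "g \<cdot> h = idm A"
  proof -
    have "g \<cdot> h = l \<cdot> (m \<cdot> h)" by (simp add: g_def)
    then show ?thesis using h lw by simp
  qed
  have ahh: "a = h\<^sup>\<dagger> \<cdot> h"
  proof -
    have "a = (m \<cdot> h)\<^sup>\<dagger> \<cdot> (m \<cdot> h)" using aww h by simp
    also have "\<dots> = h\<^sup>\<dagger> \<cdot> (m\<^sup>\<dagger> \<cdot> m) \<cdot> h" by simp
    finally show ?thesis using miso by simp
  qed
  have inv1: "(g \<cdot> g\<^sup>\<dagger>) \<cdot> a = idm A"
  proof -
    have "(g \<cdot> g\<^sup>\<dagger>) \<cdot> a = g \<cdot> (h \<cdot> g)\<^sup>\<dagger> \<cdot> h" using ahh by simp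
    then show ?thesis using hg gh1 by simp
  qed
  have inv2: "a \<cdot> (g \<cdot> g\<^sup>\<dagger>) = idm A"
  proof -
    have "a \<cdot> (g \<cdot> g\<^sup>\<dagger>) = h\<^sup>\<dagger> \<cdot> (h \<cdot> g) \<cdot> g\<^sup>\<dagger>" using ahh by simp
    also have "\<dots> = (g \<cdot> h)\<^sup>\<dagger>" using hg by simp
    finally show ?thesis using gh1 by simp
  qed
  have ggh: "g \<cdot> g\<^sup>\<dagger> \<in> hom C A A" by (simp add: hom_iff)
  have a0: "hminus C a (zr A A) = a" using m0[OF a] .
  have Qo: "ob Q" by simp
  show ?thesis
    unfolding canon_prec_def canon_le_def invertible_mor_def a0
  proof (intro conjI)
    show "zr A A \<in> hom C A A" "a \<in> hom C A A" using a by simp_all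
    show "hermitian C (zr A A)" unfolding hermitian_def by simp
    show "hermitian C a" by fact
    show "\<exists>Y\<in>Obj C. \<exists>y\<in>hom C A Y. a = y\<^sup>\<dagger> \<cdot> y" using Qo w(1) aww by metis
    show "arr a" by simp
    show "\<exists>g\<in>hom C (cd a) (dm a). g \<cdot> a = idm (dm a) \<and> a \<cdot> g = idm (cd a)"
    proof (rule bexI[of _ "g \<cdot> g\<^sup>\<dagger>"])
      have da: "cd a = A" "dm a = A" by simp_all
      show "g \<cdot> g\<^sup>\<dagger> \<in> hom C (cd a) (dm a)" unfolding da by fact
      show "(g \<cdot> g\<^sup>\<dagger>) \<cdot> a = idm (dm a) \<and> a \<cdot> (g \<cdot> g\<^sup>\<dagger>) = idm (cd a)"
        unfolding da using inv1 inv2 by (simp only:)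
    qed
  qed
qed

end

theorem proposition6p5:
  fixes C :: "('o, 'm) starcat" and A :: 'o and a b :: 'm
  assumes "pre_hilbert_star_category C"
    and "A \<in> Obj C"
    and "a \<in> hom C A A" and "b \<in> hom C A A"
    and "hermitian C a" and "hermitian C b"
    and "canon_le C A b a"
    and "canon_prec C A (zmor C A A) b"
  shows "canon_prec C A (zmor C A A) a"
proof -
  interpret phc C using assms(1) by unfold_locales
  show ?thesis using main assms(2-8) by blast
qed


end
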